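(* For $z>0$, \begin{equation*} G_{N+1,1}^{0,N+1} \left(z \Big| \begin{matrix} 1, 1/2, \ldots, 1/2 \\ 0 \end{matrix} \right) = \pi^{\frac{N}{2}} - \sum_{k=0}^{\infty} z^{-1/2-k} \sum_{j=0}^{N-1} H_{kj} \cdot \left[\log z\right]^j \end{equation*} with \begin{equation*} H_{kj} \coloneqq \frac{(-1)^{Nk}}{j!} \, \sum_{n=j}^{N-1} \left(\frac{1}{2}+k\right)^{-(n-j+1)} \sum_{j_1+\ldots+j_N=N-1-n} \ \prod_{t=1}^N \left\{\sum_{\ell_1+\ldots+\ell_{k+1}=j_t} \frac{\Gamma^{(\ell_{k+1})}(1)}{\ell_{k+1}!} \left\{\prod_{i=1}^{k-1} \left(k-i+1\right)^{-(\ell_i+1)}\right\}\right\}, \end{equation*} where $j_i \in \mathbb{N}_0$ and $\ell_i\in \mathbb{N}_0$.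
   Context: $N \in \mathbb{N}$; $\log$ denotes the natural logarithm; $\Gamma^{(\ell)}$ denotes the $\ell$-th derivative of the Gamma function. $G_{p,q}^{m,n}\left(z \Big| \begin{matrix} a_1,\ldots, a_p \\ b_1,\ldots, b_q\end{matrix}\right)$ is the Meijer G-function, defined by the contour integral $\frac{1}{2\pi \mathrm{i}} \int_{\mathcal{L}} \frac{\prod_{j=1}^m \Gamma(b_j+s) \prod_{i=1}^n \Gamma(1-a_i-s)}{\prod_{i=n+1}^p \Gamma(a_i+s) \prod_{j=m+1}^q \Gamma(1-b_j-s)} z^{-s} \, \mathrm{d} s$ over a contour $\mathcal{L}$ separating the poles of the $\Gamma(b_j+s)$ from those of the $\Gamma(1-a_i-s)$. *)

theory Defs
  imports "HOL-Analysis.Analysis"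
begin

definition meijerG_integrand ::
  "nat \<Rightarrow> nat \<Rightarrow> complex list \<Rightarrow> complex list \<Rightarrow> complex \<Rightarrow> complex \<Rightarrow> complex" where
  "meijerG_integrand m n as bs z s =
     (\<Prod>j<m. Gamma (bs ! j + s)) * (\<Prod>i<n. Gamma (1 - as ! i - s)) /
     ((\<Prod>i\<in>{n..<length as}. Gamma (as ! i + s)) * (\<Prod>j\<in>{m..<length bs}. Gamma (1 - bs ! j - s)))
     * z powr (- s)"

text \<open>Meijer G-function as the contour integral over the upward vertical line Re s = c,
  i.e. s = c + i t, ds = i dt, t from -infinity to +infinity.\<close>
definition meijerG_vline ::
  "nat \<Rightarrow> nat \<Rightarrow> complex list \<Rightarrow> complex list \<Rightarrow> real \<Rightarrow> complex \<Rightarrow> complex" where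
  "meijerG_vline m n as bs c z =
     (1 / (2 * complex_of_real pi * \<i>)) *
     (LINT t|lborel. meijerG_integrand m n as bs z (Complex c t) * \<i>)"

definition comps :: "nat \<Rightarrow> nat \<Rightarrow> nat list set" where
  "comps len s = {xs. length xs = len \<and> sum_list xs = s}"

text \<open>Inner factor: sum over l_1+...+l_{k+1} = jt (l_i = ls!(i-1)).\<close>
definition H_inner :: "nat \<Rightarrow> nat \<Rightarrow> real" where
  "H_inner k jt = (\<Sum>ls\<in>comps (k + 1) jt.
      ((deriv ^^ (ls ! k)) (Gamma :: real \<Rightarrow> real) 1 / fact (ls ! k)) *
      (\<Prod>i\<in>{1..k - 1}. inverse (real (k - i + 1)) ^ (ls ! (i - 1) + 1)))"

definition H_coeff :: "nat \<Rightarrow> nat \<Rightarrow> nat \<Rightarrow> real" where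
  "H_coeff N k j = ((-1) ^ (N * k) / fact j) *
     (\<Sum>n\<in>{j..N - 1}. inverse (1/2 + real k) ^ (n - j + 1) *
        (\<Sum>js\<in>comps N (N - 1 - n). \<Prod>t\<in>{1..N}. H_inner k (js ! (t - 1))))"

end

theory Submission
  imports Defs "HOL-Complex_Analysis.Complex_Analysis" "HOL-Probability.Sinc_Integral" "HOL-Real_Asymp.Real_Asymp"
begin

lemma norm_Gamma_le:
  fixes w :: complex assumes "Re w > 0"
  shows "norm (Gamma w) \<le> Gamma (Re w)"
proof -
  have A: "((\<lambda>t. of_real t powr (w - 1) / of_real (exp t)) has_integral Gamma w) {0..}"
    by (rule Gamma_integral_complex) fact
  have B: "((\<lambda>t. t powr (Re w - 1) / exp t) has_integral Gamma (Re w)) {0..}"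
    by (rule Gamma_integral_real) fact
  have "norm (integral {0..} (\<lambda>t. of_real t powr (w - 1) / of_real (exp t)))
        \<le> integral {0..} (\<lambda>t. t powr (Re w - 1) / exp t)"
  proof (rule integral_norm_bound_integral)
    show "(\<lambda>t. of_real t powr (w - 1) / of_real (exp t)) integrable_on {0..}" using A by blast
    show "(\<lambda>t. t powr (Re w - 1) / exp t) integrable_on {0..}" using B by blast
    fix t :: real assume "t \<in> {0..}"
    then show "norm (of_real t powr (w - 1) / of_real (exp t)) \<le> t powr (Re w - 1) / exp t"
      by (simp add: norm_divide norm_powr_real_powr)
  qed
  then show ?thesis using A B by (simp add: integral_unique)
qed

lemma norm_Gamma_le_poch:
  fixes w :: complex and m :: nat
  assumes "Re w + real m > 0" "w \<notin> \<int>\<^sub>\<le>\<^sub>0"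
  shows "norm (Gamma w) * norm (pochhammer w m) \<le> Gamma (Re w + real m)"
proof -
  have "pochhammer w m = Gamma (w + of_nat m) / Gamma w" by (rule pochhammer_Gamma) fact
  then have "Gamma w * pochhammer w m = Gamma (w + of_nat m)"
    using Gamma_nonzero[OF assms(2)] by simp
  then have "norm (Gamma w) * norm (pochhammer w m) = norm (Gamma (w + of_nat m))"
    by (metis norm_mult)
  also have "\<dots> \<le> Gamma (Re (w + of_nat m))" using assms by (intro norm_Gamma_le) simp
  finally show ?thesis by simp
qed

lemma norm_pochhammer_ge_Im:
  fixes w :: complex
  shows "norm (pochhammer w m) \<ge> \<bar>Im w\<bar> ^ m"
proof -
  have "norm (pochhammer w m) = (\<Prod>j<m. norm (w + of_nat j))"
    by (simp add: pochhammer_prod prod_norm atLeast0LessThan)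
  also have "\<dots> \<ge> (\<Prod>j<m. \<bar>Im w\<bar>)"
    using abs_Im_le_cmod[of "w + of_nat j" for j] by (intro prod_mono) auto
  finally show ?thesis by simp
qed

definition FF :: "nat \<Rightarrow> real \<Rightarrow> complex \<Rightarrow> complex" where
  "FF N z s = - ((Gamma (1/2 - s)) ^ N) * ((of_real z) powr (- s)) / s"

lemma integrand_eq:
  fixes s :: complex
  assumes "Re s < 0"
  shows "meijerG_integrand 0 (N + 1) (1 # replicate N (1/2)) [0] (of_real z) s = FF N z s"
proof -
  have ns: "- s \<notin> \<int>\<^sub>\<le>\<^sub>0"
  proof
    assume "- s \<in> \<int>\<^sub>\<le>\<^sub>0"
    then obtain n where "- s = of_int n" "n \<le> 0" by (auto elim!: nonpos_Ints_cases)
    then have "Re (- s) = of_int n" by simp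
    with assms \<open>n \<le> 0\<close> show False by simp
  qed
  have "(\<Prod>i<N+1. Gamma (1 - (1 # replicate N (1/2)) ! i - s)) = Gamma (- s) * Gamma (1/2 - s) ^ N"
    by (simp add: prod.lessThan_Suc_shift del: prod.lessThan_Suc)
  moreover have "(\<Prod>j\<in>{0..<length [0::complex]}. Gamma (1 - [0::complex] ! j - s)) = Gamma (1 - s)"
    by simp
  moreover have "Gamma (1 - s) = (- s) * Gamma (- s)"
    using Gamma_plus1[OF ns] by (simp add: algebra_simps)
  moreover have "Gamma (- s) \<noteq> 0" using Gamma_nonzero[OF ns] .
  moreover have "s \<noteq> 0" using assms by auto
  ultimately show ?thesis
    unfolding meijerG_integrand_def FF_def by (simp add: field_simps)
qed

lemma FF_norm:
  assumes "z > 0"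
  shows "norm (FF N z s) = norm (Gamma (1/2 - s)) ^ N * z powr (- Re s) / norm s"
  using assms by (simp add: FF_def norm_mult norm_divide norm_power norm_powr_real_powr)

lemma integrable_by_bound:
  fixes g :: "real \<Rightarrow> complex"
  assumes "continuous_on UNIV g" "\<And>t. norm (g t) \<le> K * inverse (1 + t^2)"
  shows "integrable lborel g" "norm (LINT t|lborel. g t) \<le> K * pi"
proof -
  have i1: "integrable lborel (\<lambda>t::real. inverse (1 + t^2))"
    using integrable_inverse_1_plus_square by (simp add: set_integrable_def einterval_def)
  have v1: "(LINT t|lborel. inverse (1 + t^2)) = pi"
    using LBINT_inverse_1_plus_square
    by (simp add: interval_lebesgue_integral_def set_lebesgue_integral_def einterval_def)
  have i2: "integrable lborel (\<lambda>t::real. K * inverse (1 + t^2))" using i1 by simp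
  show ig: "integrable lborel g"
    by (rule Bochner_Integration.integrable_bound[OF i2])
       (auto intro!: borel_measurable_continuous_onI assms intro: order.trans[OF assms(2)] abs_ge_self)
  have "norm (LINT t|lborel. g t) \<le> (LINT t|lborel. K * inverse (1 + t^2))"
    by (rule Bochner_Integration.integral_norm_bound_integral[OF ig i2 assms(2)])
  also have "\<dots> = K * pi" using v1 by simp
  finally show "norm (LINT t|lborel. g t) \<le> K * pi" .
qed

lemma line_limit:
  fixes f :: "complex \<Rightarrow> complex"
  assumes int: "integrable lborel (\<lambda>t. f (Complex \<sigma> t))"
      and cont: "continuous_on UNIV (\<lambda>t. f (Complex \<sigma> t))"
  shows "((\<lambda>T. contour_integral (linepath (Complex \<sigma> (-T)) (Complex \<sigma> T)) f)
           \<longlongrightarrow> \<i> * (LINT t|lborel. f (Complex \<sigma> t))) at_top"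
proof -
  define g where "g = (\<lambda>t. f (Complex \<sigma> t))"
  have eq: "contour_integral (linepath (Complex \<sigma> (-T)) (Complex \<sigma> T)) f
            = \<i> * (LINT t|lborel. indicator {-T..T} t *\<^sub>R g t)" if T: "T > 0" for T
  proof -
    have si: "set_integrable lborel {-T..T} g"
      unfolding set_integrable_def using int g_def
      by (intro integrable_mult_indicator) auto
    have "(g has_integral (LINT t : {-T..T} | lborel. g t)) {-T..T}"
      using set_borel_integral_eq_integral[OF si] by (simp add: has_integral_integral)
    then have "(g has_integral (- \<i> * (\<i> * (LINT t : {-T..T} | lborel. g t)))) {-T..T}" by simp
    then have "(f has_contour_integral (\<i> * (LINT t : {-T..T} | lborel. g t)))
                 (linepath (Complex \<sigma> (-T)) (Complex \<sigma> T))"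
      using T unfolding g_def
      by (subst has_contour_integral_linepath_same_Re_iff[of _ \<sigma> _ "-T" T]) auto
    then show ?thesis
      by (simp add: contour_integral_unique set_lebesgue_integral_def)
  qed
  have lim: "((\<lambda>T. LINT t|lborel. indicator {-T..T} t *\<^sub>R g t) \<longlongrightarrow> (LINT t|lborel. g t)) at_top"
  proof (rule integral_dominated_convergence_at_top[where w = "\<lambda>t. norm (g t)"])
    show "g \<in> borel_measurable lborel" using int g_def by auto
    show "(\<lambda>t. indicator {-T..T} t *\<^sub>R g t) \<in> borel_measurable lborel" for T
      using int g_def by (intro borel_measurable_scaleR) auto
    show "integrable lborel (\<lambda>t. norm (g t))" using int g_def by auto
    show "AE t in lborel. ((\<lambda>T. indicator {-T..T} t *\<^sub>R g t) \<longlongrightarrow> g t) at_top"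
    proof (rule AE_I2)
      fix t :: real
      have "eventually (\<lambda>T. indicator {-T..T} t *\<^sub>R g t = g t) at_top"
        using eventually_ge_at_top[of "\<bar>t\<bar>"] by eventually_elim (auto simp: indicator_def)
      then show "((\<lambda>T. indicator {-T..T} t *\<^sub>R g t) \<longlongrightarrow> g t) at_top"
        by (rule tendsto_eventually)
    qed
    show "\<forall>\<^sub>F T in at_top. AE t in lborel. norm (indicator {-T..T} t *\<^sub>R g t) \<le> norm (g t)"
      by (intro always_eventually allI AE_I2) (auto simp: indicator_def)
  qed
  have "((\<lambda>T. \<i> * (LINT t|lborel. indicator {-T..T} t *\<^sub>R g t)) \<longlongrightarrow> \<i> * (LINT t|lborel. g t)) at_top"
    by (intro tendsto_mult tendsto_const lim)
  also have "?this \<longleftrightarrow> ?thesis"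
    by (intro filterlim_cong refl eventually_mono[OF eventually_gt_at_top[of 0]]) (simp_all add: eq g_def)
  finally show ?thesis .
qed

lemma not_nonpos_Int_if_Re_pos: "Re (w::complex) > 0 \<Longrightarrow> w \<notin> \<int>\<^sub>\<le>\<^sub>0"
  by (auto elim!: nonpos_Ints_cases)

lemma not_nonpos_Int_if_Im: "Im (w::complex) \<noteq> 0 \<Longrightarrow> w \<notin> \<int>\<^sub>\<le>\<^sub>0"
  by (auto elim!: nonpos_Ints_cases)

lemma FF_bound_c:
  fixes z c t :: real
  assumes z: "z > 0" and c: "c < 0" and N: "N \<ge> 1"
  shows "norm (FF N z (Complex c t)) \<le>
     (Gamma (1/2 - c) ^ (N - 1) * Gamma (3/2 - c) * z powr (- c) / min (c^2) 1) * inverse (1 + t^2)"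
proof -
  define s where "s = Complex c t"
  define w where "w = 1/2 - s"
  define A where "A = Gamma (1/2 - c)"
  define B where "B = Gamma (3/2 - c)"
  define m where "m = min (c^2) (1::real)"
  have Rew: "Re w = 1/2 - c" by (simp add: w_def s_def)
  have A0: "A > 0" using c by (simp add: A_def)
  have B0: "B > 0" using c by (simp add: B_def)
  have m0: "m > 0" using c by (simp add: m_def)
  have nGA: "norm (Gamma w) \<le> A"
    using norm_Gamma_le[of w] Rew c by (simp add: A_def)
  have nGB: "norm (Gamma w) * norm w \<le> B"
    using norm_Gamma_le_poch[of w 1] Rew c not_nonpos_Int_if_Re_pos[of w]
    by (simp add: B_def)
  have ns2: "norm s ^ 2 = c^2 + t^2" by (simp add: s_def cmod_power2)
  have nw2: "norm w ^ 2 = (1/2 - c)^2 + t^2" by (simp add: w_def s_def cmod_power2)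
  have nsw: "norm s \<le> norm w"
  proof -
    have "(- c)^2 \<le> (1/2 - c)^2" using c by (intro power_mono) auto
    then have "norm s ^ 2 \<le> norm w ^ 2" using ns2 nw2 by simp
    then show ?thesis by (rule power2_le_imp_le) simp
  qed
  have s0: "norm s > 0" using c by (simp add: s_def complex_eq_iff)
  have w0: "norm w > 0" using nsw s0 by linarith
  have mle: "m * (1 + t^2) \<le> c^2 + t^2"
  proof (cases "c^2 \<le> 1")
    case True
    have "c^2 * t^2 \<le> 1 * t^2" using True by (intro mult_right_mono) auto
    then show ?thesis using True by (simp add: m_def min_def algebra_simps)
  next
    case False
    then show ?thesis by (simp add: m_def min_def algebra_simps)
  qed
  have eqF: "norm (FF N z s) = norm (Gamma w) ^ N * z powr (- c) / norm s"
    using FF_norm[OF z] by (simp add: w_def s_def)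
  have "norm (Gamma w) ^ N = norm (Gamma w) ^ (N - 1) * norm (Gamma w)"
    using N by (metis Suc_diff_le diff_Suc_1 power_Suc2)
  also have "\<dots> \<le> A ^ (N - 1) * (B / norm w)"
    using nGA nGB w0 A0 by (intro mult_mono power_mono) (auto simp: field_simps)
  finally have "norm (Gamma w) ^ N * z powr (- c) / norm s \<le> A ^ (N - 1) * (B / norm w) * z powr (- c) / norm s"
    using s0 by (intro divide_right_mono mult_right_mono) auto
  then have "norm (FF N z s) \<le> A ^ (N - 1) * (B / norm w) * z powr (- c) / norm s"
    using eqF by simp
  also have "\<dots> = (A ^ (N - 1) * B * z powr (- c)) / (norm w * norm s)" by simp
  also have "\<dots> \<le> (A ^ (N - 1) * B * z powr (- c)) / (norm s * norm s)"
    using A0 B0 s0 w0 nsw by (intro divide_left_mono mult_right_mono mult_pos_pos) auto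
  also have "norm s * norm s = c^2 + t^2" using ns2 by (simp add: power2_eq_square)
  also have "(A ^ (N - 1) * B * z powr (- c)) / (c^2 + t^2) \<le> (A ^ (N - 1) * B * z powr (- c)) / (m * (1 + t^2))"
  proof (intro divide_left_mono)
    have "0 < m * (1 + t^2)" using m0 by (intro mult_pos_pos) (auto intro: add_pos_nonneg)
    moreover have "0 < c^2 + t^2" using calculation mle by linarith
    ultimately show "0 < (c^2 + t^2) * (m * (1 + t^2))" by (rule mult_pos_pos[rotated])
  qed (use A0 B0 mle in auto)
  also have "\<dots> = (A ^ (N - 1) * B * z powr (- c) / m) * inverse (1 + t^2)"
    by (simp add: field_simps)
  finally show ?thesis by (simp add: s_def A_def B_def m_def)
qed

lemma half_minus_nat_not_int: "(of_int n :: real) \<noteq> 1/2 - of_nat M"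
proof
  assume "(of_int n :: real) = 1/2 - of_nat M"
  then have "(of_int (2 * n) :: real) = of_int (1 - 2 * int M)" by simp
  then have "2 * n = 1 - 2 * int M" by (simp only: of_int_eq_iff)
  then show False by presburger
qed

lemma aux_quarter: "0 \<le> (u::real) \<Longrightarrow> 1/4 + u \<le> v \<Longrightarrow> (1 + u) / 4 \<le> v"
  by (simp add: field_simps)

lemma FF_bound_M:
  fixes z t :: real
  assumes z: "z > 0" and N: "N \<ge> 1" and M: "M \<ge> 4"
  shows "norm (FF N z (Complex (real M) t)) \<le>
     (4 * sqrt pi * z powr (- real M) / fact (M - 1)) * inverse (1 + t^2)"
proof -
  define s where "s = Complex (real M) t"
  define w where "w = 1/2 - s"
  define m where "m = M - 1"
  have Mm: "M = Suc m" using M by (simp add: m_def)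
  have Rew: "Re w = 1/2 - real M" by (simp add: w_def s_def)
  have wnI: "w \<notin> \<int>\<^sub>\<le>\<^sub>0"
  proof
    assume "w \<in> \<int>\<^sub>\<le>\<^sub>0"
    then obtain n where "w = of_int n" by (auto elim!: nonpos_Ints_cases)
    then have "Re w = of_int n" by simp
    with Rew half_minus_nat_not_int[of n M] show False by simp
  qed
  have key: "norm (Gamma w) * norm (pochhammer w M) \<le> sqrt pi"
    using norm_Gamma_le_poch[of w M] Rew wnI by (simp add: Gamma_one_half_real)
  have pe: "norm (pochhammer w M) = (\<Prod>j<m. norm (w + of_nat j)) * norm (w + of_nat m)"
    by (simp add: Mm pochhammer_prod prod_norm atLeast0LessThan norm_mult)
  have pj: "(\<Prod>j<m. norm (w + of_nat j)) \<ge> (\<Prod>j<m. real (m - j))"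
  proof (intro prod_mono conjI)
    fix j assume j: "j \<in> {..<m}"
    have "real (m - j) \<le> \<bar>Re (w + of_nat j)\<bar>" using j by (simp add: Rew Mm of_nat_diff)
    also have "\<dots> \<le> norm (w + of_nat j)" by (rule abs_Re_le_cmod)
    finally show "real (m - j) \<le> norm (w + of_nat j)" .
  qed auto
  have fm: "(\<Prod>j<m. real (m - j)) = fact m"
    by (simp add: fact_prod_rev atLeast0LessThan)
  define r where "r = norm (w + of_nat m)"
  have wm: "w + of_nat m = Complex (-1/2) (-t)" by (simp add: complex_eq_iff w_def s_def Mm)
  have r2: "r^2 = 1/4 + t^2" unfolding r_def wm cmod_power2 by (simp add: power2_eq_square)
  have r0: "r \<ge> 1/2"
  proof -
    have "(1/2)^2 \<le> r^2" using r2 by (simp add: power2_eq_square)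
    then show ?thesis by (rule power2_le_imp_le) (simp add: r_def)
  qed
  have s2: "norm s ^ 2 = real M ^ 2 + t^2" by (simp add: s_def cmod_power2)
  have rs: "r \<le> norm s"
  proof -
    have "(1/2::real)^2 \<le> real M ^ 2" using M by (intro power_mono) auto
    then have "r^2 \<le> norm s ^ 2" using r2 s2 by (simp add: power2_eq_square)
    then show ?thesis by (rule power2_le_imp_le) simp
  qed
  have fpos: "fact m > (0::real)" by simp
  have f6: "fact m \<ge> (6::real)"
  proof -
    have "fact 3 \<le> (fact m :: real)" using M Mm by (intro fact_mono) auto
    then show ?thesis by (simp add: fact_numeral)
  qed
  have poch_ge: "norm (pochhammer w M) \<ge> fact m * r"
    using pe pj fm r0 by (simp add: r_def) (metis fm mult_right_mono norm_ge_zero)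
  have nG: "norm (Gamma w) \<le> sqrt pi / (fact m * r)"
  proof -
    have "norm (Gamma w) * (fact m * r) \<le> norm (Gamma w) * norm (pochhammer w M)"
      using poch_ge by (intro mult_left_mono) auto
    also have "\<dots> \<le> sqrt pi" by (rule key)
    finally show ?thesis using fpos r0 by (simp add: field_simps)
  qed
  have sp: "sqrt pi \<le> 2"
  proof -
    have "sqrt pi \<le> sqrt 4" using pi_less_4 by (intro real_sqrt_le_mono) auto
    then show ?thesis by simp
  qed
  have nG1: "norm (Gamma w) \<le> 1"
  proof -
    have "sqrt pi / (fact m * r) \<le> 2 / (6 * (1/2))"
      using sp f6 r0 by (intro frac_le mult_mono) auto
    then have "sqrt pi / (fact m * r) \<le> 2/3" by simp
    then show ?thesis using nG by linarith
  qed
  have pN: "norm (Gamma w) ^ N \<le> norm (Gamma w)"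
    using power_decreasing[OF N, of "norm (Gamma w)"] nG1 by simp
  have s0: "norm s > 0" using rs r0 by linarith
  have eqF: "norm (FF N z s) = norm (Gamma w) ^ N * z powr (- real M) / norm s"
    using FF_norm[OF z] by (simp add: w_def s_def)
  also have "\<dots> \<le> (sqrt pi / (fact m * r)) * z powr (- real M) / norm s"
    using pN nG s0 by (intro divide_right_mono mult_right_mono) auto
  also have "\<dots> = sqrt pi * z powr (- real M) / fact m / (r * norm s)"
    by (simp add: field_simps)
  also have "\<dots> \<le> sqrt pi * z powr (- real M) / fact m / ((1 + t^2) / 4)"
  proof (rule divide_left_mono)
    have "r * r \<le> r * norm s" using rs r0 by (intro mult_left_mono) auto
    then have h: "1/4 + t * t \<le> r * norm s" using r2 by (simp add: power2_eq_square)
    have "0 \<le> t * t" by simp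
    then show "(1 + t^2) / 4 \<le> r * norm s" unfolding power2_eq_square using h
      by (rule aux_quarter)
    show "0 < r * norm s * ((1 + t\<^sup>2) / 4)" using r0 s0 by (intro mult_pos_pos) (auto intro: add_pos_nonneg)
  qed auto
  also have "\<dots> = (4 * sqrt pi * z powr (- real M) / fact (M - 1)) * inverse (1 + t^2)"
    by (simp add: m_def field_simps)
  finally show ?thesis by (simp add: s_def)
qed

lemma powr_le_sum_ends:
  fixes z a b x :: real
  assumes "z > 0" "a \<le> x" "x \<le> b"
  shows "z powr x \<le> z powr a + z powr b"
proof (cases "z \<ge> 1")
  case True
  then have "z powr x \<le> z powr b" using assms by (intro powr_mono) auto
  then show ?thesis by (smt (verit) powr_ge_zero)
next
  case False
  then have "z powr x \<le> z powr a" using assms by (intro powr_mono') auto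
  then show ?thesis by (smt (verit) powr_ge_zero)
qed

lemma FF_bound_horiz:
  fixes z c \<sigma> \<tau> :: real
  assumes z: "z > 0" and N: "N \<ge> 1" and c: "c < 0" and sig: "c \<le> \<sigma>" "\<sigma> \<le> real M"
      and tau: "\<bar>\<tau>\<bar> \<ge> 1"
  shows "norm (FF N z (Complex \<sigma> \<tau>)) \<le>
     (max (Gamma (3/2 + real M - c)) 1) ^ N * (z powr (- c) + z powr (- real M)) / \<tau>^2"
proof -
  define s where "s = Complex \<sigma> \<tau>"
  define w where "w = 1/2 - s"
  define K where "K = max (Gamma (3/2 + real M - c)) 1"
  have K1: "K \<ge> 1" by (simp add: K_def)
  have Imw: "Im w = - \<tau>" by (simp add: w_def s_def)
  have Rew: "Re w = 1/2 - \<sigma>" by (simp add: w_def s_def)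
  have wnI: "w \<notin> \<int>\<^sub>\<le>\<^sub>0" using tau Imw by (intro not_nonpos_Int_if_Im) auto
  have key: "norm (Gamma w) * norm (pochhammer w (M + 1)) \<le> Gamma (3/2 + real M - \<sigma>)"
    using norm_Gamma_le_poch[of w "M + 1"] Rew wnI sig by (simp add: algebra_simps)
  have GK: "Gamma (3/2 + real M - \<sigma>) \<le> K"
  proof (cases "\<sigma> = c")
    case True then show ?thesis by (simp add: K_def)
  next
    case False
    then have "Gamma (3/2 + real M - \<sigma>) < Gamma (3/2 + real M - c)"
      using sig by (intro Gamma_real_strict_mono) auto
    then show ?thesis by (simp add: K_def)
  qed
  have pg: "norm (pochhammer w (M + 1)) \<ge> \<bar>\<tau>\<bar>"
  proof -
    have "\<bar>\<tau>\<bar> ^ 1 \<le> \<bar>\<tau>\<bar> ^ (M + 1)" using tau by (intro power_increasing) auto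
    also have "\<dots> \<le> norm (pochhammer w (M + 1))" using norm_pochhammer_ge_Im[of w "M+1"] Imw by simp
    finally show ?thesis by simp
  qed
  have t0: "\<bar>\<tau>\<bar> > 0" using tau by linarith
  have nG: "norm (Gamma w) \<le> K / \<bar>\<tau>\<bar>"
  proof -
    have "norm (Gamma w) * \<bar>\<tau>\<bar> \<le> norm (Gamma w) * norm (pochhammer w (M + 1))"
      using pg by (intro mult_left_mono) auto
    also have "\<dots> \<le> K" using key GK by linarith
    finally show ?thesis using t0 by (simp add: field_simps)
  qed
  have nGK: "norm (Gamma w) \<le> K"
  proof -
    have "K / \<bar>\<tau>\<bar> \<le> K / 1" using K1 tau by (intro divide_left_mono) auto
    then show ?thesis using nG by simp
  qed
  have pN: "norm (Gamma w) ^ N \<le> K ^ N / \<bar>\<tau>\<bar>"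
  proof -
    have "norm (Gamma w) ^ N = norm (Gamma w) ^ (N - 1) * norm (Gamma w)"
      using N by (metis Suc_diff_le diff_Suc_1 power_Suc2)
    also have "\<dots> \<le> K ^ (N - 1) * (K / \<bar>\<tau>\<bar>)"
      using nGK nG K1 by (intro mult_mono power_mono) auto
    also have "\<dots> = K ^ N / \<bar>\<tau>\<bar>"
      using N by (simp add: power_Suc2[symmetric])
    finally show ?thesis .
  qed
  have zb: "z powr (- \<sigma>) \<le> z powr (- c) + z powr (- real M)"
    using powr_le_sum_ends[of z "- real M" "- \<sigma>" "- c"] z sig by (simp add: add.commute)
  have ns: "norm s \<ge> \<bar>\<tau>\<bar>" using abs_Im_le_cmod[of s] by (simp add: s_def)
  have "norm (FF N z s) = norm (Gamma w) ^ N * z powr (- \<sigma>) / norm s"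
    using FF_norm[OF z] by (simp add: w_def s_def)
  also have "\<dots> \<le> (K ^ N / \<bar>\<tau>\<bar>) * (z powr (- c) + z powr (- real M)) / \<bar>\<tau>\<bar>"
    using pN zb ns t0 K1
    by (intro frac_le mult_mono) auto
  also have "\<dots> = K ^ N * (z powr (- c) + z powr (- real M)) / \<tau>^2"
    by (simp add: power2_eq_square abs_mult_self_eq)
  finally show ?thesis by (simp add: s_def K_def)
qed

definition poles :: "nat \<Rightarrow> complex set" where
  "poles M = insert 0 ((\<lambda>k. 1/2 + of_nat k) ` {..<M})"

definition HS :: "nat \<Rightarrow> complex set" where
  "HS M = {s. Re s < real M + 1/4}"

lemma half_minus_in_nonpos_Ints:
  assumes "1/2 - s \<in> \<int>\<^sub>\<le>\<^sub>0"
  obtains k :: nat where "s = 1/2 + of_nat k"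
proof -
  from assms obtain n where n: "1/2 - s = of_int n" "n \<le> 0" by (auto elim!: nonpos_Ints_cases)
  have "s = 1/2 + of_nat (nat (- n))" using n by (simp add: algebra_simps)
  then show ?thesis by (rule that)
qed

lemma FF_holo: "FF N z holomorphic_on (HS M - poles M)"
proof -
  have nz: "s \<noteq> 0" if "s \<in> HS M - poles M" for s using that by (auto simp: poles_def)
  have ng: "1/2 - s \<notin> \<int>\<^sub>\<le>\<^sub>0" if "s \<in> HS M - poles M" for s
  proof
    assume "1/2 - s \<in> \<int>\<^sub>\<le>\<^sub>0"
    then obtain k :: nat where k: "s = 1/2 + of_nat k" by (rule half_minus_in_nonpos_Ints)
    then have "real k < real M" using that by (simp add: HS_def)
    then have "s \<in> poles M" using k by (auto simp: poles_def)
    then show False using that by simp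
  qed
  show ?thesis unfolding FF_def [abs_def]
    using nz ng by (intro holomorphic_intros) auto
qed

lemma open_HS: "open (HS M)" unfolding HS_def by (intro open_halfspace_Re_lt)

lemma connected_HS: "connected (HS M)"
  unfolding HS_def by (intro convex_connected convex_halfspace_Re_lt)

lemma finite_poles: "finite (poles M)" by (simp add: poles_def)

lemma in_H_Re: "Re s \<le> real M \<Longrightarrow> Im s \<noteq> 0 \<Longrightarrow> s \<in> HS M - poles M"
  by (auto simp: HS_def poles_def)

lemma in_H_c: "(c::real) < 0 \<Longrightarrow> Re s = c \<Longrightarrow> s \<in> HS M - poles M"
  by (auto simp: HS_def poles_def)

lemma in_H_M: "M \<ge> 1 \<Longrightarrow> Re s = real M \<Longrightarrow> s \<in> HS M - poles M"
proof -
  assume M: "M \<ge> 1" and s: "Re s = real M"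
  have "s \<notin> poles M"
  proof
    assume "s \<in> poles M"
    then consider "s = 0" | k where "s = 1/2 + of_nat k" by (auto simp: poles_def)
    then show False
    proof cases
      case 1 then show False using M s by simp
    next
      case 2
      then have "real M = 1/2 + real k" using s by simp
      then have "real (2 * M) = real (1 + 2 * k)" by simp
      then have "2 * M = 1 + 2 * k" by (simp only: of_nat_eq_iff)
      then show False by presburger
    qed
  qed
  then show ?thesis using s by (simp add: HS_def)
qed

lemma rect_identity:
  fixes c T :: real
  assumes c: "c < 0" and M: "M \<ge> 1" and T: "T > 0"
  shows "contour_integral (linepath (Complex c (-T)) (Complex c T)) (FF N z) =
     contour_integral (linepath (Complex (real M) (-T)) (Complex (real M) T)) (FF N z)
   + contour_integral (linepath (Complex c (-T)) (Complex (real M) (-T))) (FF N z)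
   + contour_integral (linepath (Complex (real M) T) (Complex c T)) (FF N z)
   - 2 * pi * \<i> * (\<Sum>p\<in>poles M. residue (FF N z) p)"
proof -
  define f where "f = FF N z"
  define a1 where "a1 = Complex c (-T)"
  define a2 where "a2 = Complex (real M) (-T)"
  define a3 where "a3 = Complex (real M) T"
  define a4 where "a4 = Complex c T"
  define H where "H = HS M - poles M"
  have cM: "c < real M" using c M by simp
  have cont: "continuous_on H f" unfolding f_def H_def
    by (rule holomorphic_on_imp_continuous_on[OF FF_holo])
  have s12: "closed_segment a1 a2 \<subseteq> H"
  proof
    fix s assume "s \<in> closed_segment a1 a2"
    then have "Im s = -T" "Re s \<in> closed_segment c (real M)"
      by (auto simp: closed_segment_same_Im a1_def a2_def)
    then show "s \<in> H" unfolding H_def using T cM by (intro in_H_Re) (auto simp: closed_segment_eq_real_ivl)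
  qed
  have s23: "closed_segment a2 a3 \<subseteq> H"
  proof
    fix s assume "s \<in> closed_segment a2 a3"
    then have "Re s = real M" by (auto simp: closed_segment_same_Re a2_def a3_def)
    then show "s \<in> H" unfolding H_def using M by (intro in_H_M) auto
  qed
  have s34: "closed_segment a3 a4 \<subseteq> H"
  proof
    fix s assume "s \<in> closed_segment a3 a4"
    then have "Im s = T" "Re s \<in> closed_segment (real M) c"
      by (auto simp: closed_segment_same_Im a3_def a4_def)
    then show "s \<in> H" unfolding H_def using T cM by (intro in_H_Re) (auto simp: closed_segment_eq_real_ivl)
  qed
  have s41: "closed_segment a4 a1 \<subseteq> H"
  proof
    fix s assume "s \<in> closed_segment a4 a1"
    then have "Re s = c" by (auto simp: closed_segment_same_Re a4_def a1_def)
    then show "s \<in> H" unfolding H_def using c by (intro in_H_c) auto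
  qed
  have c12: "continuous_on (closed_segment a1 a2) f" using cont s12 by (rule continuous_on_subset)
  have c23: "continuous_on (closed_segment a2 a3) f" using cont s23 by (rule continuous_on_subset)
  have c34: "continuous_on (closed_segment a3 a4) f" using cont s34 by (rule continuous_on_subset)
  have c41: "continuous_on (closed_segment a4 a1) f" using cont s41 by (rule continuous_on_subset)
  note ci = contour_integrable_continuous_linepath[OF c12] contour_integrable_continuous_linepath[OF c23]
            contour_integrable_continuous_linepath[OF c34] contour_integrable_continuous_linepath[OF c41]
  have rp: "rectpath a1 a3 = linepath a1 a2 +++ linepath a2 a3 +++ linepath a3 a4 +++ linepath a4 a1"
    by (simp add: rectpath_def Let_def a1_def a2_def a3_def a4_def)
  have split: "contour_integral (rectpath a1 a3) f =
      contour_integral (linepath a1 a2) f + (contour_integral (linepath a2 a3) f +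
      (contour_integral (linepath a3 a4) f + contour_integral (linepath a4 a1) f))"
    unfolding rp using ci by (simp add: contour_integrable_joinI)
  have rev: "contour_integral (linepath a4 a1) f = - contour_integral (linepath a1 a4) f"
    by (rule contour_integral_reverse_linepath[OF c41])
  have box: "p \<in> box a1 a3" if "p \<in> poles M" for p
    using that c M T by (auto simp: poles_def in_box_complex_iff a1_def a3_def)
  have pim: "path_image (rectpath a1 a3) \<subseteq> H"
  proof
    fix s assume "s \<in> path_image (rectpath a1 a3)"
    then have "(Re s \<in> {c, real M} \<and> Im s \<in> {-T..T}) \<or> (Im s \<in> {-T, T} \<and> Re s \<in> {c..real M})"
      using cM T by (subst (asm) path_image_rectpath) (auto simp: a1_def a3_def)
    then show "s \<in> H" unfolding H_def
    proof (elim disjE conjE)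
      assume "Re s \<in> {c, real M}"
      then consider "Re s = c" | "Re s = real M" by auto
      then show "s \<in> HS M - poles M"
        by cases (metis in_H_c[OF c], metis in_H_M[OF M])
    next
      assume "Im s \<in> {-T, T}" "Re s \<in> {c..real M}"
      then have "Re s \<le> real M" "Im s \<noteq> 0" using T by auto
      then show "s \<in> HS M - poles M" by (rule in_H_Re)
    qed
  qed
  have res: "contour_integral (rectpath a1 a3) f =
        2 * pi * \<i> * (\<Sum>p\<in>poles M. winding_number (rectpath a1 a3) p * residue f p)"
  proof (rule Residue_theorem[OF open_HS connected_HS finite_poles])
    show "f holomorphic_on HS M - poles M" unfolding f_def by (rule FF_holo)
    show "valid_path (rectpath a1 a3)" by simp
    show "pathfinish (rectpath a1 a3) = pathstart (rectpath a1 a3)" by simp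
    show "path_image (rectpath a1 a3) \<subseteq> HS M - poles M" using pim by (simp add: H_def)
    show "\<forall>w. w \<notin> HS M \<longrightarrow> winding_number (rectpath a1 a3) w = 0"
    proof (intro allI impI winding_number_rectpath_outside)
      fix w assume "w \<notin> HS M"
      then show "w \<notin> cbox a1 a3" by (auto simp: HS_def in_cbox_complex_iff a3_def)
    qed (use cM T in \<open>auto simp: a1_def a3_def\<close>)
  qed
  have "(\<Sum>p\<in>poles M. winding_number (rectpath a1 a3) p * residue f p) = (\<Sum>p\<in>poles M. residue f p)"
    by (intro sum.cong refl) (simp add: winding_number_rectpath box)
  with res split rev show ?thesis
    by (simp add: f_def a1_def a2_def a3_def a4_def algebra_simps)
qed

lemma comps_0: "comps 0 m = (if m = 0 then {[]} else {})"
  by (auto simp: comps_def)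

lemma comps_Suc: "comps (Suc n) m = (\<lambda>(a, xs). a # xs) ` (SIGMA a:{0..m}. comps n (m - a))"
proof safe
  fix ys assume "ys \<in> comps (Suc n) m"
  then obtain a xs where ys: "ys = a # xs" "length xs = n" "a + sum_list xs = m"
    by (cases ys) (auto simp: comps_def)
  then show "ys \<in> (\<lambda>(a, xs). a # xs) ` (SIGMA a:{0..m}. comps n (m - a))"
    by (intro image_eqI[of _ _ "(a, xs)"]) (auto simp: comps_def)
qed (auto simp: comps_def)

lemma finite_comps: "finite (comps n m)"
proof -
  have "comps n m \<subseteq> {xs. set xs \<subseteq> {0..m} \<and> length xs = n}"
    by (auto simp: comps_def dest: member_le_sum_list)
  moreover have "finite {xs. set xs \<subseteq> {0..m} \<and> length xs = n}"
    by (rule finite_lists_length_eq) simp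
  ultimately show ?thesis by (rule finite_subset)
qed

lemma fps_nth_prod_comps:
  fixes f :: "nat \<Rightarrow> 'a :: comm_ring_1 fps"
  shows "fps_nth (\<Prod>i<n. f i) m = (\<Sum>xs\<in>comps n m. \<Prod>i<n. fps_nth (f i) (xs ! i))"
proof (induction n arbitrary: f m)
  case 0
  then show ?case by (simp add: comps_0)
next
  case (Suc n)
  have "fps_nth (\<Prod>i<Suc n. f i) m = fps_nth (f 0 * (\<Prod>i<n. f (Suc i))) m"
    by (simp add: prod.lessThan_Suc_shift del: prod.lessThan_Suc)
  also have "\<dots> = (\<Sum>a=0..m. fps_nth (f 0) a * (\<Sum>xs\<in>comps n (m - a). \<Prod>i<n. fps_nth (f (Suc i)) (xs ! i)))"
    by (simp add: fps_mult_nth Suc.IH)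
  also have "\<dots> = (\<Sum>(a, xs)\<in>(SIGMA a:{0..m}. comps n (m - a)). \<Prod>i<Suc n. fps_nth (f i) ((a # xs) ! i))"
    by (subst sum.Sigma[symmetric]) (auto simp: finite_comps sum_distrib_left prod.lessThan_Suc_shift
        simp del: prod.lessThan_Suc intro!: sum.cong)
  also have "\<dots> = (\<Sum>ys\<in>comps (Suc n) m. \<Prod>i<Suc n. fps_nth (f i) (ys ! i))"
    unfolding comps_Suc
    by (subst sum.reindex) (auto simp: inj_on_def case_prod_beta)
  finally show ?case .
qed

lemma fps_inverse_lin:
  fixes a :: "'a :: field"
  assumes "a \<noteq> 0"
  shows "fps_nth (inverse (fps_const a + fps_X)) n = (-1)^n / a^(n+1)"
proof -
  define G where "G = Abs_fps (\<lambda>n. (-1)^n / a^(n+1) :: 'a)"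
  have "(fps_const a + fps_X) * G = 1"
  proof (rule fps_ext)
    fix n show "fps_nth ((fps_const a + fps_X) * G) n = fps_nth 1 n"
      using assms by (cases n) (simp_all add: G_def distrib_right field_simps)
  qed
  then have "inverse (fps_const a + fps_X) = G" by (rule fps_inverse_unique)
  then show ?thesis by (simp add: G_def)
qed

lemma higher_deriv_Gamma_real:
  fixes x :: real
  assumes "x > 0"
  shows "(deriv ^^ n) (Gamma :: complex \<Rightarrow> complex) (of_real x) = of_real ((deriv ^^ n) (Gamma :: real \<Rightarrow> real) x)"
  using assms
proof (induction n arbitrary: x)
  case 0
  then show ?case by (simp add: Gamma_complex_of_real)
next
  case (Suc n)
  define gC where "gC = (deriv ^^ n) (Gamma :: complex \<Rightarrow> complex)"
  define gR where "gR = (deriv ^^ n) (Gamma :: real \<Rightarrow> real)"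
  define U where "U = {w::complex. Re w > 0}"
  have oU: "open U" unfolding U_def by (rule open_halfspace_Re_gt)
  have hU: "Gamma holomorphic_on U"
    by (rule holomorphic_Gamma) (auto simp: U_def elim!: nonpos_Ints_cases)
  have hg: "gC holomorphic_on U" unfolding gC_def by (rule holomorphic_higher_deriv[OF hU oU])
  define D where "D = deriv gC (of_real x)"
  have dD: "(gC has_field_derivative D) (at (of_real x))"
    unfolding D_def using Suc.prems by (intro holomorphic_derivI[OF hg oU]) (auto simp: U_def)
  have h1: "((\<lambda>t. gC (of_real t)) has_derivative (\<lambda>h. D * of_real h)) (at x)"
    using has_derivative_compose[OF has_derivative_of_real[OF has_derivative_ident]
        has_field_derivative_imp_has_derivative[OF dD]] by simp
  have hRe: "((\<lambda>t. Re (gC (of_real t))) has_derivative (\<lambda>h. Re (D * of_real h))) (at x)"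
    by (rule bounded_linear.has_derivative[OF bounded_linear_Re h1])
  have hIm: "((\<lambda>t. Im (gC (of_real t))) has_derivative (\<lambda>h. Im (D * of_real h))) (at x)"
    by (rule bounded_linear.has_derivative[OF bounded_linear_Im h1])
  have eqC: "gC (of_real t) = of_real (gR t)" if "t > 0" for t
    using Suc.IH[OF that] by (simp add: gC_def gR_def)
  have hR: "(gR has_derivative (\<lambda>h. Re (D * of_real h))) (at x)"
    by (rule has_derivative_transform_within_open[OF hRe, of "{0<..}"]) (use Suc.prems eqC in auto)
  have hI: "((\<lambda>t. 0::real) has_derivative (\<lambda>h. Im (D * of_real h))) (at x)"
    by (rule has_derivative_transform_within_open[OF hIm, of "{0<..}"]) (use Suc.prems eqC in auto)
  have "(\<lambda>h::real. Im (D * of_real h)) = (\<lambda>h. 0)"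
    by (rule has_derivative_unique[OF hI]) (rule has_derivative_const)
  then have "Im (D * of_real 1) = 0" by metis
  then have ImD: "Im D = 0" by simp
  have "(gR has_field_derivative Re D) (at x)"
  proof -
    have "(\<lambda>h. Re (D * of_real h)) = (*) (Re D)" by (auto simp: fun_eq_iff)
    then show ?thesis unfolding has_field_derivative_def using hR by simp
  qed
  then have "deriv gR x = Re D" by (rule DERIV_imp_deriv)
  then have "D = of_real (deriv gR x)" using ImD by (simp add: complex_eq_iff)
  then show ?case by (simp add: D_def gC_def gR_def)
qed

lemma higher_deriv_Gamma_1_minus:
  "(deriv ^^ n) (\<lambda>e::complex. Gamma (1 - e)) 0 = (-1)^n * of_real ((deriv ^^ n) (Gamma :: real \<Rightarrow> real) 1)"
proof -
  have hU: "Gamma holomorphic_on {w::complex. Re w > 0}"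
    by (rule holomorphic_Gamma) (auto elim!: nonpos_Ints_cases)
  have "(deriv ^^ n) (\<lambda>w::complex. Gamma ((-1) * w + 1)) 0 = (-1)^n * (deriv ^^ n) Gamma ((-1) * 0 + 1)"
  proof (rule higher_deriv_compose_linear'[where S = "ball 0 1" and u = "-1" and c = 1 and z = 0])
    show "Gamma holomorphic_on {w::complex. Re w > 0}" by (rule hU)
    fix w :: complex assume "w \<in> ball 0 1"
    then have "\<bar>Re w\<bar> < 1" using abs_Re_le_cmod[of w] by simp
    then show "(-1) * w + 1 \<in> {w. Re w > 0}" by simp
  qed (auto intro: open_halfspace_Re_gt)
  also have "(\<lambda>w::complex. Gamma ((-1) * w + 1)) = (\<lambda>e. Gamma (1 - e))" by (simp add: algebra_simps)
  finally show ?thesis using higher_deriv_Gamma_real[of 1 n] by simp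
qed

lemma int_small_zero: "(e::complex) = of_int m \<Longrightarrow> norm e < 1/2 \<Longrightarrow> m = 0"
  by (simp add: norm_of_int)

lemma Gamma_near_pole:
  fixes e :: complex
  assumes e0: "e \<noteq> 0" and en: "norm e < 1/2"
  shows "Gamma (1/2 - (1/2 + of_nat k + e)) = (-1)^(k+1) * Gamma (1 - e) / (e * pochhammer (e + 1) k)"
proof -
  define w where "w = - (of_nat k + e)"
  have ww: "1/2 - (1/2 + of_nat k + e) = w" by (simp add: w_def)
  have wn: "w \<notin> \<int>\<^sub>\<le>\<^sub>0"
  proof
    assume "w \<in> \<int>\<^sub>\<le>\<^sub>0"
    then obtain n where "w = of_int n" by (auto elim!: nonpos_Ints_cases)
    then have "e = of_int (- n - int k)" unfolding w_def by (simp add: minus_equation_iff[of e] algebra_simps)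
    then have "- n - int k = 0" using en by (rule int_small_zero)
    then have "e = 0" using \<open>e = of_int (- n - int k)\<close> by simp
    with e0 show False by simp
  qed
  have P0: "pochhammer (e + 1) k \<noteq> 0"
  proof
    assume "pochhammer (e + 1) k = 0"
    then obtain j where "e + 1 = - of_nat j" by (auto simp: pochhammer_eq_0_iff)
    then have "e = of_int (- int j - 1)" by (simp add: algebra_simps)
    then have "- int j - 1 = 0" using en by (rule int_small_zero)
    then show False by simp
  qed
  have "pochhammer w (k + 1) = Gamma (w + of_nat (k + 1)) / Gamma w"
    by (rule pochhammer_Gamma[OF wn])
  also have "w + of_nat (k + 1) = 1 - e" by (simp add: w_def)
  finally have pg: "pochhammer w (k + 1) = Gamma (1 - e) / Gamma w" .
  have "pochhammer w (k + 1) = (-1)^(k+1) * pochhammer ((of_nat k + e) - of_nat (k + 1) + 1) (k + 1)"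
    unfolding w_def by (rule pochhammer_minus)
  also have "(of_nat k + e) - of_nat (k + 1) + 1 = e" by simp
  also have "pochhammer e (k + 1) = e * pochhammer (e + 1) k" by (simp add: pochhammer_rec)
  finally have pw: "pochhammer w (k + 1) = (-1)^(k+1) * (e * pochhammer (e + 1) k)" .
  have G0: "Gamma w \<noteq> 0" using Gamma_nonzero[OF wn] .
  have pw0: "pochhammer w (k + 1) \<noteq> 0" using pw P0 e0 by simp
  have "Gamma (1 - e) = pochhammer w (k + 1) * Gamma w" using pg G0 by (simp add: field_simps)
  then have "Gamma w = Gamma (1 - e) / pochhammer w (k + 1)"
    using pw0 by simp
  also have "\<dots> = (-1)^(k+1) * Gamma (1 - e) / (e * pochhammer (e + 1) k)"
    unfolding pw by (cases "even k") (auto simp: field_simps)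
  finally show ?thesis using ww by simp
qed


definition hres :: "nat \<Rightarrow> real \<Rightarrow> nat \<Rightarrow> complex \<Rightarrow> complex" where
  "hres N z k e = (- (((-1)^(k+1))^N)) *
     (((Gamma (1 - e) * (\<Prod>j<k. inverse (of_nat (Suc j) + e))) ^ N *
       ((of_real z) powr (- (1/2 + of_nat k)) * exp ((- of_real (ln z)) * e))) *
      inverse ((1/2 + of_nat k) + e))"

lemma FF_eq_h:
  fixes e :: complex
  assumes z: "z > 0" and e0: "e \<noteq> 0" and en: "norm e < 1/2"
  shows "FF N z (1/2 + of_nat k + e) = hres N z k e / e ^ N"
proof -
  define P where "P = pochhammer (e + 1) k"
  have P: "P = (\<Prod>j<k. of_nat (Suc j) + e)"
    by (simp add: P_def pochhammer_prod atLeast0LessThan algebra_simps)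
  have iP: "inverse P = (\<Prod>j<k. inverse (of_nat (Suc j) + e))"
    unfolding P by (simp add: prod_inversef[symmetric] o_def)
  have zpow: "(of_real z) powr (- (1/2 + of_nat k + e)) =
      (of_real z) powr (- (1/2 + of_nat k)) * exp ((- of_real (ln z)) * e)"
    using z by (simp add: powr_def Ln_of_real exp_add[symmetric] algebra_simps)
  have G: "Gamma (1/2 - (1/2 + of_nat k + e)) = (-1)^(k+1) * Gamma (1 - e) / (e * P)"
    unfolding P_def by (rule Gamma_near_pole[OF e0 en])
  have G': "Gamma (1/2 - (1/2 + of_nat k + e)) = (-1)^(k+1) * (Gamma (1 - e) * inverse P) / e"
    unfolding G by (simp add: divide_inverse mult_ac)
  have alg: "- ((a * x / e)^N) * zz / q = (- (a^N)) * ((x^N * zz) * inverse q) / e^N"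
    for a x zz q :: complex
    by (simp add: power_mult_distrib power_divide divide_inverse mult_ac power_inverse)
  show ?thesis
    unfolding FF_def hres_def G' zpow iP[symmetric] alg by (simp add: add.assoc)
qed

lemma has_fps_expansion_power':
  fixes F :: "complex fps"
  assumes "f has_fps_expansion F"
  shows "(\<lambda>x. f x ^ n) has_fps_expansion F ^ n"
proof (induction n)
  case 0
  then show ?case by (simp add: has_fps_expansion_1)
next
  case (Suc n)
  then show ?case using has_fps_expansion_mult[OF assms Suc] by simp
qed

lemma has_fps_expansion_inv_lin:
  fixes a :: complex
  assumes "a \<noteq> 0"
  shows "(\<lambda>e. inverse (a + e)) has_fps_expansion inverse (fps_const a + fps_X)"
  using assms
  by (intro has_fps_expansion_inverse has_fps_expansion_add has_fps_expansion_const
        has_fps_expansion_fps_X) auto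

lemma has_fps_expansion_inv_nat:
  "(\<lambda>e. inverse (of_nat (Suc j) + e)) has_fps_expansion inverse (fps_const (of_nat (Suc j) :: complex) + fps_X)"
proof (rule has_fps_expansion_inv_lin)
  show "(of_nat (Suc j) :: complex) \<noteq> 0" by (rule of_nat_neq_0)
qed

definition G1 :: "complex fps" where
  "G1 = fps_expansion (\<lambda>e. Gamma (1 - e)) 0"

lemma G1_expansion: "(\<lambda>e. Gamma (1 - e)) has_fps_expansion G1"
  unfolding G1_def
proof (rule has_fps_expansion_fps_expansion[of "ball 0 1"])
  show "(\<lambda>e. Gamma (1 - e)) holomorphic_on ball 0 1"
  proof (intro holomorphic_intros)
    fix e :: complex assume "e \<in> ball 0 1"
    then have "\<bar>Re e\<bar> < 1" using abs_Re_le_cmod[of e] by simp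
    then have "Re (1 - e) > 0" by simp
    show "1 - e \<notin> \<int>\<^sub>\<le>\<^sub>0"
    proof
      assume "1 - e \<in> \<int>\<^sub>\<le>\<^sub>0"
      then obtain n where n: "1 - e = of_int n" "n \<le> 0" by (auto elim!: nonpos_Ints_cases)
      then have "Re (1 - e) = of_int n" by simp
      with \<open>Re (1 - e) > 0\<close> n(2) show False by simp
    qed
  qed
qed auto

definition Hf :: "nat \<Rightarrow> real \<Rightarrow> nat \<Rightarrow> complex fps" where
  "Hf N z k = fps_const (- (((-1)^(k+1))^N)) *
     (((G1 * (\<Prod>j<k. inverse (fps_const (of_nat (Suc j)) + fps_X))) ^ N *
       (fps_const ((of_real z) powr (- (1/2 + of_nat k))) * fps_exp (- of_real (ln z)))) *
      inverse (fps_const (1/2 + of_nat k) + fps_X))"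

lemma hres_expansion: "hres N z k has_fps_expansion Hf N z k"
proof -
  have p0: "(1/2 + of_nat k :: complex) \<noteq> 0"
  proof
    assume "(1/2 + of_nat k :: complex) = 0"
    then have "Re (1/2 + of_nat k :: complex) = 0" by simp
    then show False by simp
  qed
  have sj: "(1 + of_nat j :: complex) \<noteq> 0" for j by (metis of_nat_Suc of_nat_neq_0)
  have "(\<lambda>e. hres N z k e) has_fps_expansion Hf N z k"
    unfolding hres_def Hf_def
    by (intro has_fps_expansion_cmult_left has_fps_expansion_mult has_fps_expansion_power'
          G1_expansion has_fps_expansion_prod has_fps_expansion_inv_nat has_fps_expansion_inv_lin has_fps_expansion_exp p0) auto
  then show ?thesis by simp
qed

lemma residue_pole_k:
  assumes z: "z > 0" and N: "N \<ge> 1"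
  shows "residue (FF N z) (1/2 + of_nat k) = fps_nth (Hf N z k) (N - 1)"
proof -
  have ev: "eventually (\<lambda>e. FF N z (1/2 + of_nat k + e) = hres N z k e / e ^ Suc (N - 1)) (at 0)"
  proof -
    have "eventually (\<lambda>e::complex. e \<in> ball 0 (1/2)) (at 0)"
      by (intro eventually_at_in_open') auto
    moreover have "eventually (\<lambda>e::complex. e \<noteq> 0) (at 0)" by (rule eventually_neq_at_within)
    ultimately show ?thesis
    proof eventually_elim
      case (elim e)
      then show ?case using FF_eq_h[OF z, of e N k] N by simp
    qed
  qed
  have "residue (FF N z) (1/2 + of_nat k) = residue (\<lambda>e. FF N z (1/2 + of_nat k + e)) 0"
    by (rule residue_shift_0)
  also have "\<dots> = residue (\<lambda>e. hres N z k e / e ^ Suc (N - 1)) 0"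
    by (rule residue_cong[OF ev refl])
  also have "\<dots> = fps_nth (Hf N z k) (N - 1)"
    by (rule residue_fps_expansion_over_power_at_0[OF hres_expansion])
  finally show ?thesis .
qed

definition fq :: "nat \<Rightarrow> nat \<Rightarrow> complex fps" where
  "fq k q = (if q = k then G1 else inverse (fps_const (of_nat (k - q)) + fps_X))"

lemma Q_as_prod:
  "G1 * (\<Prod>j<k. inverse (fps_const (of_nat (Suc j)) + fps_X)) = (\<Prod>q<Suc k. fq k q)"
proof -
  have "(\<Prod>q<k. fq k q) = (\<Prod>q<k. inverse (fps_const (of_nat (Suc (k - Suc q))) + fps_X))"
    by (intro prod.cong refl) (auto simp: fq_def Suc_diff_Suc)
  also have "\<dots> = (\<Prod>j<k. inverse (fps_const (of_nat (Suc j)) + fps_X))"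
    by (rule prod.nat_diff_reindex[where g = "\<lambda>j. inverse (fps_const (of_nat (Suc j)) + fps_X)"])
  finally show ?thesis by (simp add: fq_def)
qed

lemma G1_nth: "fps_nth G1 l = (-1)^l * of_real ((deriv ^^ l) (Gamma :: real \<Rightarrow> real) 1) / fact l"
  by (simp add: G1_def fps_expansion_def higher_deriv_Gamma_1_minus)

lemma fq_nth_lt: "q < k \<Longrightarrow> fps_nth (fq k q) l = (-1)^l * of_real (inverse (real (k - q)) ^ (l + 1))"
  by (simp add: fq_def fps_inverse_lin power_inverse divide_inverse)

lemma prod_inner_reindex:
  fixes ls :: "nat list"
  shows "(\<Prod>q<k. inverse (real (k - q)) ^ (ls ! q + 1)) =
         (\<Prod>i\<in>{1..k - 1}. inverse (real (k - i + 1)) ^ (ls ! (i - 1) + 1))"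
proof (cases k)
  case 0 then show ?thesis by simp
next
  case (Suc m)
  have "(\<Prod>q<k. inverse (real (k - q)) ^ (ls ! q + 1)) = (\<Prod>q<m. inverse (real (Suc m - q)) ^ (ls ! q + 1))"
    by (simp add: Suc)
  also have "\<dots> = (\<Prod>i\<in>{Suc 0..m}. inverse (real (Suc m - i + 1)) ^ (ls ! (i - 1) + 1))"
    by (subst prod.atLeast1_atMost_eq) (auto intro!: prod.cong simp: Suc_diff_Suc of_nat_diff algebra_simps)
  finally show ?thesis by (simp add: Suc)
qed

lemma Q_nth:
  "fps_nth (G1 * (\<Prod>j<k. inverse (fps_const (of_nat (Suc j)) + fps_X))) J = (-1)^J * of_real (H_inner k J)"
proof -
  have "fps_nth (G1 * (\<Prod>j<k. inverse (fps_const (of_nat (Suc j)) + fps_X))) J =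
        (\<Sum>ls\<in>comps (Suc k) J. \<Prod>q<Suc k. fps_nth (fq k q) (ls ! q))"
    unfolding Q_as_prod by (rule fps_nth_prod_comps)
  also have "\<dots> = (\<Sum>ls\<in>comps (Suc k) J. (-1)^J * of_real
        ((deriv ^^ (ls ! k)) (Gamma :: real \<Rightarrow> real) 1 / fact (ls ! k) *
         (\<Prod>i\<in>{1..k - 1}. inverse (real (k - i + 1)) ^ (ls ! (i - 1) + 1))))"
  proof (intro sum.cong refl)
    fix ls assume ls: "ls \<in> comps (Suc k) J"
    then have len: "length ls = Suc k" and sl: "sum_list ls = J" by (auto simp: comps_def)
    have sumJ: "(\<Sum>q<Suc k. ls ! q) = J"
      using sl len by (simp add: sum_list_sum_nth atLeast0LessThan)
    have "(\<Prod>q<Suc k. fps_nth (fq k q) (ls ! q)) =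
          (\<Prod>q<k. fps_nth (fq k q) (ls ! q)) * fps_nth (fq k k) (ls ! k)" by simp
    also have "(\<Prod>q<k. fps_nth (fq k q) (ls ! q)) =
          (\<Prod>q<k. (-1)^(ls ! q) * of_real (inverse (real (k - q)) ^ (ls ! q + 1)))"
      by (intro prod.cong refl) (simp add: fq_nth_lt)
    also have "\<dots> = (\<Prod>q<k. (-1::complex)^(ls ! q)) * of_real (\<Prod>q<k. inverse (real (k - q)) ^ (ls ! q + 1))"
      by (simp add: prod.distrib)
    also have "fps_nth (fq k k) (ls ! k) = (-1)^(ls ! k) * of_real ((deriv ^^ (ls ! k)) (Gamma :: real \<Rightarrow> real) 1) / fact (ls ! k)"
      by (simp add: fq_def G1_nth)
    also have "(\<Prod>q<k. (-1::complex)^(ls ! q)) = (-1)^(\<Sum>q<k. ls ! q)"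
      by (simp add: power_sum)
    finally have "(\<Prod>q<Suc k. fps_nth (fq k q) (ls ! q)) =
        ((-1)^(\<Sum>q<k. ls ! q) * (-1)^(ls ! k)) * of_real ((deriv ^^ (ls ! k)) (Gamma :: real \<Rightarrow> real) 1 / fact (ls ! k) *
           (\<Prod>q<k. inverse (real (k - q)) ^ (ls ! q + 1)))"
      by (simp add: field_simps)
    also have "(-1::complex)^(\<Sum>q<k. ls ! q) * (-1)^(ls ! k) = (-1)^J"
      using sumJ by (simp add: power_add[symmetric])
    finally have F: "(\<Prod>q<Suc k. fps_nth (fq k q) (ls ! q)) = (-1)^J * of_real
        ((deriv ^^ (ls ! k)) (Gamma :: real \<Rightarrow> real) 1 / fact (ls ! k) *
         (\<Prod>q<k. inverse (real (k - q)) ^ (ls ! q + 1)))" .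
    show "(\<Prod>q<Suc k. fps_nth (fq k q) (ls ! q)) = (-1)^J * of_real
        ((deriv ^^ (ls ! k)) (Gamma :: real \<Rightarrow> real) 1 / fact (ls ! k) *
         (\<Prod>i\<in>{1..k - 1}. inverse (real (k - i + 1)) ^ (ls ! (i - 1) + 1)))"
      using F by (simp only: prod_inner_reindex)
  qed
  also have "\<dots> = (-1)^J * of_real (H_inner k J)"
    by (simp add: H_inner_def sum_distrib_left)
  finally show ?thesis .
qed

definition Bsum :: "nat \<Rightarrow> nat \<Rightarrow> nat \<Rightarrow> real" where
  "Bsum N k J = (\<Sum>js\<in>comps N J. \<Prod>t\<in>{1..N}. H_inner k (js ! (t - 1)))"

lemma QN_nth:
  "fps_nth ((G1 * (\<Prod>j<k. inverse (fps_const (of_nat (Suc j)) + fps_X))) ^ N) J = (-1)^J * of_real (Bsum N k J)"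
proof -
  define Q where "Q = G1 * (\<Prod>j<k. inverse (fps_const (of_nat (Suc j)) + fps_X))"
  have QJ: "fps_nth Q J' = (-1)^J' * of_real (H_inner k J')" for J'
    unfolding Q_def by (rule Q_nth)
  have "Q ^ N = (\<Prod>i<N. Q)" by simp
  then have "fps_nth (Q ^ N) J = (\<Sum>js\<in>comps N J. \<Prod>i<N. fps_nth Q (js ! i))"
    by (simp only: fps_nth_prod_comps)
  also have "\<dots> = (\<Sum>js\<in>comps N J. (-1)^J * of_real (\<Prod>t\<in>{1..N}. H_inner k (js ! (t - 1))))"
  proof (intro sum.cong refl)
    fix js assume js: "js \<in> comps N J"
    then have len: "length js = N" and sl: "sum_list js = J" by (auto simp: comps_def)
    have sumJ: "(\<Sum>i<N. js ! i) = J"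
      using sl len by (simp add: sum_list_sum_nth atLeast0LessThan)
    have "(\<Prod>i<N. fps_nth Q (js ! i)) = (\<Prod>i<N. (-1)^(js ! i) * of_real (H_inner k (js ! i)))"
      by (simp add: QJ)
    also have "\<dots> = (-1)^(\<Sum>i<N. js ! i) * of_real (\<Prod>i<N. H_inner k (js ! i))"
      by (simp add: prod.distrib power_sum)
    also have "(\<Prod>i<N. H_inner k (js ! i)) = (\<Prod>t\<in>{1..N}. H_inner k (js ! (t - 1)))"
      using prod.atLeast1_atMost_eq[where n = N and g = "\<lambda>t. H_inner k (js ! (t - 1))"] by simp
    finally show "(\<Prod>i<N. fps_nth Q (js ! i)) = (-1)^J * of_real (\<Prod>t\<in>{1..N}. H_inner k (js ! (t - 1)))"
      using sumJ by simp
  qed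
  also have "\<dots> = (-1)^J * of_real (Bsum N k J)"
    by (simp add: Bsum_def sum_distrib_left)
  finally show ?thesis by (simp add: Q_def)
qed

lemma sign_lemma:
  assumes "N \<ge> 1"
  shows "- (((-1::complex)^(k+1))^N) * (-1)^(N-1) = (-1)^(N*k)"
proof -
  obtain n where N: "N = Suc n" using assms by (cases N) auto
  have "((-1::complex)^(k+1))^N = (-1)^(N*k) * (-1)^n * (-1)"
    by (simp add: N power_add algebra_simps) (simp add: power_minus[of "(-1)^k"] power_mult)
  moreover have "(-1::complex)^n * (-1)^n = 1"
    by (simp add: power_add[symmetric] power_mult_distrib[symmetric])
  ultimately show ?thesis by (simp add: N algebra_simps)
qed

lemma Zp_real:
  assumes "z > 0"
  shows "(of_real z :: complex) powr (- (1/2 + of_nat k)) = of_real (z powr (- 1/2 - real k))"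
proof -
  have "(- (1/2 + of_nat k) :: complex) = of_real (- 1/2 - real k)" by simp
  then show ?thesis using powr_of_real[of z "- 1/2 - real k"] assms by simp
qed

lemma p_nonzero: "(1/2 + of_nat k :: complex) \<noteq> 0"
proof
  assume "(1/2 + of_nat k :: complex) = 0"
  then have "Re (1/2 + of_nat k :: complex) = 0" by simp
  then show False by simp
qed

lemma aux_div_pow: "(a::complex) / p ^ n = a * inverse p ^ n"
  by (simp add: divide_inverse power_inverse)

lemma Ip_nth: "fps_nth (inverse (fps_const (1/2 + of_nat k :: complex) + fps_X)) r =
   (-1)^r * of_real (inverse (1/2 + real k) ^ (r + 1))"
proof -
  have "fps_nth (inverse (fps_const (1/2 + of_nat k) + fps_X)) r = (-1)^r / (1/2 + of_nat k :: complex)^(r+1)"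
    by (rule fps_inverse_lin[OF p_nonzero])
  also have "\<dots> = (-1)^r * of_real (inverse (1/2 + real k) ^ (r + 1))"
  proof -
    have "of_real (inverse (1/2 + real k) ^ (r + 1)) = (inverse (of_real (1/2 + real k)) ^ (r+1) :: complex)"
      by (simp only: of_real_power of_real_inverse)
    also have "(of_real (1/2 + real k) :: complex) = 1/2 + of_nat k" by simp
    finally show ?thesis by (simp only: aux_div_pow)
  qed
  finally show ?thesis .
qed


lemma Hf_nth:
  assumes z: "z > 0" and N: "N \<ge> 1"
  shows "fps_nth (Hf N z k) (N - 1) = of_real (z powr (- 1/2 - real k) * (\<Sum>j<N. H_coeff N k j * (ln z) ^ j))"
proof -
  define QN where "QN = (G1 * (\<Prod>j<k. inverse (fps_const (of_nat (Suc j)) + fps_X))) ^ N"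
  define Ip where "Ip = inverse (fps_const (1/2 + of_nat k) + fps_X :: complex fps)"
  define E where "E = fps_exp (- of_real (ln z) :: complex)"
  define C0 where "C0 = - (((-1::complex)^(k+1))^N)"
  define Zp where "Zp = (of_real z :: complex) powr (- (1/2 + of_nat k))"
  define zp where "zp = z powr (- 1/2 - real k)"
  define ip where "ip = inverse (1/2 + real k)"
  define S where "S = (\<Sum>j=0..N-1. (ln z)^j / fact j * (\<Sum>r=0..N-1-j. ip^(r+1) * Bsum N k (N-1-j-r)))"
  have Hf_eq: "Hf N z k = fps_const C0 * (fps_const Zp * (E * (Ip * QN)))"
    unfolding Hf_def QN_def Ip_def E_def C0_def Zp_def by (simp add: mult_ac)
  have QNn: "fps_nth QN J = (-1)^J * of_real (Bsum N k J)" for J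
    unfolding QN_def by (rule QN_nth)
  have Ipn: "fps_nth Ip r = (-1)^r * of_real (ip ^ (r+1))" for r
    unfolding Ip_def ip_def by (rule Ip_nth)
  have En: "fps_nth E j = (-1)^j * of_real ((ln z)^j / fact j)" for j
    by (simp add: E_def power_minus[of "of_real (ln z)"])
  have inner: "fps_nth (Ip * QN) m = (-1)^m * of_real (\<Sum>r=0..m. ip^(r+1) * Bsum N k (m - r))" for m
  proof -
    have "fps_nth (Ip * QN) m = (\<Sum>r=0..m. fps_nth Ip r * fps_nth QN (m - r))" by (rule fps_mult_nth)
    also have "\<dots> = (\<Sum>r=0..m. (-1)^m * of_real (ip^(r+1) * Bsum N k (m - r)))"
    proof (intro sum.cong refl)
      fix r assume "r \<in> {0..m}"
      then have "(-1::complex)^r * (-1)^(m - r) = (-1)^m" by (simp add: power_add[symmetric])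
      then show "fps_nth Ip r * fps_nth QN (m - r) = (-1)^m * of_real (ip^(r+1) * Bsum N k (m - r))"
        by (simp add: Ipn QNn)
    qed
    also have "\<dots> = (-1)^m * of_real (\<Sum>r=0..m. ip^(r+1) * Bsum N k (m - r))"
      by (simp add: sum_distrib_left)
    finally show ?thesis .
  qed
  have outer: "fps_nth (E * (Ip * QN)) (N-1) = (-1)^(N-1) * of_real S"
  proof -
    have "fps_nth (E * (Ip * QN)) (N-1) = (\<Sum>j=0..N-1. fps_nth E j * fps_nth (Ip * QN) (N-1-j))"
      by (rule fps_mult_nth)
    also have "\<dots> = (\<Sum>j=0..N-1. (-1)^(N-1) * of_real ((ln z)^j / fact j * (\<Sum>r=0..N-1-j. ip^(r+1) * Bsum N k (N-1-j-r))))"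
    proof (intro sum.cong refl)
      fix j assume "j \<in> {0..N-1}"
      then have jN: "j + (N - 1 - j) = N - 1" by simp
      have "(-1::complex)^j * (-1)^(N-1-j) = (-1)^(N-1)" by (simp only: power_add[symmetric] jN)
      then show "fps_nth E j * fps_nth (Ip * QN) (N-1-j) = (-1)^(N-1) * of_real ((ln z)^j / fact j * (\<Sum>r=0..N-1-j. ip^(r+1) * Bsum N k (N-1-j-r)))"
        by (simp add: En inner)
    qed
    also have "\<dots> = (-1)^(N-1) * of_real S"
      by (simp add: S_def sum_distrib_left)
    finally show ?thesis .
  qed
  have Hc: "H_coeff N k j = (-1)^(N*k) / fact j * (\<Sum>r=0..N-1-j. ip^(r+1) * Bsum N k (N-1-j-r))"
    if j: "j \<le> N - 1" for j
  proof -
    define g where "g = (\<lambda>n. ip ^ (n - j + 1) * Bsum N k (N - 1 - n))"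
    have "H_coeff N k j = (-1)^(N*k) / fact j * sum g {j..N-1}"
      by (simp add: H_coeff_def g_def Bsum_def ip_def)
    also have "{j..N-1} = {0 + j..(N - 1 - j) + j}" using j by simp
    also have "sum g {0 + j..(N - 1 - j) + j} = (\<Sum>r=0..N-1-j. g (r + j))"
      by (rule sum.shift_bounds_cl_nat_ivl)
    also have "\<dots> = (\<Sum>r=0..N-1-j. ip^(r+1) * Bsum N k (N-1-j-r))"
      by (intro sum.cong refl) (simp add: g_def add.commute)
    finally show ?thesis .
  qed
  have sumN: "(\<Sum>j<N. H_coeff N k j * (ln z) ^ j) = (-1)^(N*k) * S"
  proof -
    have "{..<N} = {0..N-1}" using N by auto
    then have "(\<Sum>j<N. H_coeff N k j * (ln z) ^ j) = (\<Sum>j=0..N-1. H_coeff N k j * (ln z) ^ j)" by simp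
    also have "\<dots> = (\<Sum>j=0..N-1. (-1)^(N*k) * ((ln z)^j / fact j * (\<Sum>r=0..N-1-j. ip^(r+1) * Bsum N k (N-1-j-r))))"
      by (intro sum.cong refl) (simp add: Hc)
    also have "\<dots> = (-1)^(N*k) * S" by (simp add: S_def sum_distrib_left)
    finally show ?thesis .
  qed
  have "fps_nth (Hf N z k) (N - 1) = C0 * (Zp * ((-1)^(N-1) * of_real S))"
    by (simp only: Hf_eq fps_mult_left_const_nth outer)
  also have "\<dots> = (C0 * (-1)^(N-1)) * Zp * of_real S" by (simp add: mult_ac)
  also have "C0 * (-1)^(N-1) = (-1)^(N*k)" unfolding C0_def by (rule sign_lemma[OF N])
  also have "Zp = of_real zp" unfolding Zp_def zp_def by (rule Zp_real[OF z])
  finally show ?thesis by (simp add: sumN zp_def mult_ac)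
qed

lemma pi_powr_half: "pi powr (real N / 2) = sqrt pi ^ N"
proof -
  have "sqrt pi ^ N = (pi powr (1/2)) ^ N" by (simp add: powr_half_sqrt)
  also have "\<dots> = (pi powr (1/2)) powr (real N)" by (simp add: powr_realpow)
  also have "\<dots> = pi powr (real N / 2)" by (simp add: powr_powr)
  finally show ?thesis by simp
qed

lemma residue_0:
  assumes z: "z > 0"
  shows "residue (FF N z) 0 = - of_real (pi powr (real N / 2))"
proof -
  define g0 where "g0 = (\<lambda>w::complex. - ((Gamma (1/2 - w)) ^ N) * ((of_real z) powr (- w)))"
  have eq: "FF N z = (\<lambda>w. g0 w / (w - 0))"
    by (simp add: FF_def g0_def fun_eq_iff)
  have holo: "g0 holomorphic_on ball 0 (1/2)"
    unfolding g0_def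
  proof (intro holomorphic_intros)
    fix w :: complex assume "w \<in> ball 0 (1/2)"
    then have "\<bar>Re w\<bar> < 1/2" using abs_Re_le_cmod[of w] by simp
    then have "Re (1/2 - w) > 0" by simp
    then show "1/2 - w \<notin> \<int>\<^sub>\<le>\<^sub>0" by (rule not_nonpos_Int_if_Re_pos)
  qed
  have "residue (FF N z) 0 = g0 0"
    unfolding eq by (rule residue_simple[OF _ _ holo]) auto
  also have "\<dots> = - ((of_real (sqrt pi)) ^ N)"
    using z by (simp add: g0_def Gamma_one_half_complex)
  also have "\<dots> = - of_real (pi powr (real N / 2))"
    by (simp add: pi_powr_half)
  finally show ?thesis .
qed

lemma cont_line:
  assumes "\<And>t. Complex \<sigma> t \<in> HS M - poles M"
  shows "continuous_on UNIV (\<lambda>t. FF N z (Complex \<sigma> t))"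
proof -
  have eq: "(\<lambda>t. Complex \<sigma> t) = (\<lambda>t. of_real \<sigma> + \<i> * of_real t)"
    by (simp add: fun_eq_iff complex_eq_iff)
  have c1: "continuous_on UNIV (\<lambda>t. Complex \<sigma> t)" unfolding eq by (intro continuous_intros)
  have c2: "continuous_on (HS M - poles M) (FF N z)"
    by (rule holomorphic_on_imp_continuous_on[OF FF_holo])
  show ?thesis
    by (rule continuous_on_compose2[OF c2 c1]) (use assms in auto)
qed

lemma horiz_limit:
  fixes c :: real
  assumes z: "z > 0" and N: "N \<ge> 1" and c: "c < 0" and M: "M \<ge> 1"
  assumes ab: "\<And>T. a T = Complex c (s * T) \<and> b T = Complex (real M) (s * T) \<or>
                    a T = Complex (real M) (s * T) \<and> b T = Complex c (s * T)"
      and s: "\<bar>s\<bar> = 1"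
  shows "((\<lambda>T. contour_integral (linepath (a T) (b T)) (FF N z)) \<longlongrightarrow> 0) at_top"
proof (rule Lim_null_comparison)
  define K where "K = (max (Gamma (3/2 + real M - c)) 1) ^ N * (z powr (- c) + z powr (- real M))"
  have K0: "K \<ge> 0" by (simp add: K_def)
  show "eventually (\<lambda>T. norm (contour_integral (linepath (a T) (b T)) (FF N z)) \<le> K / T^2 * (real M - c)) at_top"
    using eventually_ge_at_top[of 1]
  proof eventually_elim
    case (elim T)
    have seg: "closed_segment (a T) (b T) \<subseteq> {x. Im x = s * T \<and> Re x \<in> {c..real M}}"
      using ab[of T] c M by (auto simp: closed_segment_same_Im closed_segment_eq_real_ivl)
    have sT: "\<bar>s * T\<bar> = T" using s elim by (simp add: abs_mult)
    have inH: "closed_segment (a T) (b T) \<subseteq> HS M - poles M"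
    proof
      fix x assume "x \<in> closed_segment (a T) (b T)"
      then have "Im x = s * T" "Re x \<le> real M" using seg by auto
      moreover have "s * T \<noteq> 0" using sT elim by auto
      ultimately show "x \<in> HS M - poles M" by (intro in_H_Re) auto
    qed
    have cont: "continuous_on (closed_segment (a T) (b T)) (FF N z)"
      by (rule continuous_on_subset[OF holomorphic_on_imp_continuous_on[OF FF_holo] inH])
    have hi: "(FF N z has_contour_integral contour_integral (linepath (a T) (b T)) (FF N z)) (linepath (a T) (b T))"
      by (rule has_contour_integral_integral[OF contour_integrable_continuous_linepath[OF cont]])
    have bnd: "norm (FF N z x) \<le> K / T^2" if "x \<in> closed_segment (a T) (b T)" for x
    proof -
      have x: "Im x = s * T" "Re x \<in> {c..real M}" using that seg by auto
      have "x = Complex (Re x) (s * T)" using x by (simp add: complex_eq_iff)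
      then have "norm (FF N z x) = norm (FF N z (Complex (Re x) (s * T)))" by simp
      also have "\<dots> \<le> K / (s * T)^2"
        unfolding K_def using x sT elim by (intro FF_bound_horiz[OF z N c]) auto
      also have "(s * T)^2 = T^2" using sT by (metis power2_abs)
      finally show ?thesis .
    qed
    have d1: "Complex (real M) (s * T) - Complex c (s * T) = of_real (real M - c)"
      by (simp add: complex_eq_iff)
    have d2: "Complex c (s * T) - Complex (real M) (s * T) = of_real (c - real M)"
      by (simp add: complex_eq_iff)
    have len: "norm (b T - a T) = real M - c"
    proof (cases "a T = Complex c (s * T) \<and> b T = Complex (real M) (s * T)")
      case True
      then have "norm (b T - a T) = \<bar>real M - c\<bar>" by (simp only: d1 norm_of_real)
      then show ?thesis using c by simp
    next
      case False
      then have "a T = Complex (real M) (s * T) \<and> b T = Complex c (s * T)" using ab[of T] by blast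
      then have "norm (b T - a T) = \<bar>c - real M\<bar>" by (simp only: d2 norm_of_real)
      then show ?thesis using c by simp
    qed
    have "norm (contour_integral (linepath (a T) (b T)) (FF N z)) \<le> K / T^2 * norm (b T - a T)"
      by (rule has_contour_integral_bound_linepath[OF hi _ bnd]) (use K0 in auto)
    then show ?case using len by simp
  qed
  show "((\<lambda>T. K / T^2 * (real M - c)) \<longlongrightarrow> 0) at_top"
    by real_asymp
qed

lemma sum_poles:
  assumes z: "z > 0" and N: "N \<ge> 1"
  shows "(\<Sum>p\<in>poles M. residue (FF N z) p) =
         - of_real (pi powr (real N / 2)) +
         (\<Sum>k<M. of_real (z powr (- 1/2 - real k) * (\<Sum>j<N. H_coeff N k j * (ln z) ^ j)))"
proof -
  have nz: "0 \<notin> (\<lambda>k. 1/2 + of_nat k :: complex) ` {..<M}"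
  proof
    assume "0 \<in> (\<lambda>k. 1/2 + of_nat k :: complex) ` {..<M}"
    then obtain k where "(0::complex) = 1/2 + of_nat k" by blast
    with p_nonzero[of k] show False by simp
  qed
  have inj: "inj_on (\<lambda>k. 1/2 + of_nat k :: complex) {..<M}" by (auto simp: inj_on_def)
  have "(\<Sum>p\<in>poles M. residue (FF N z) p) =
        residue (FF N z) 0 + (\<Sum>k<M. residue (FF N z) (1/2 + of_nat k))"
    unfolding poles_def using nz inj by (simp add: sum.reindex)
  also have "\<dots> = - of_real (pi powr (real N / 2)) +
         (\<Sum>k<M. of_real (z powr (- 1/2 - real k) * (\<Sum>j<N. H_coeff N k j * (ln z) ^ j)))"
    by (simp only: residue_0[OF z] residue_pole_k[OF z N] Hf_nth[OF z N])
  finally show ?thesis .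
qed

lemma fact_decay:
  assumes z: "z > 0"
  shows "(\<lambda>M. 4 * sqrt pi * z powr (- real M) / fact (M - 1) * pi) \<longlonglongrightarrow> 0"
proof -
  define x where "x = inverse z"
  have a: "(\<lambda>n. inverse (fact n) * x ^ n) \<longlonglongrightarrow> 0"
    by (rule summable_LIMSEQ_zero[OF summable_exp])
  have "(\<lambda>n. (4 * sqrt pi * pi * x) * (inverse (fact n) * x ^ n)) \<longlonglongrightarrow> (4 * sqrt pi * pi * x) * 0"
    by (intro tendsto_mult tendsto_const a)
  moreover have h: "z powr (- real m) = x ^ m" for m
    using z by (simp add: x_def powr_minus powr_realpow power_inverse)
  ultimately have "(\<lambda>n. 4 * sqrt pi * z powr (- real (Suc n)) / fact (Suc n - 1) * pi) \<longlonglongrightarrow> 0"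
    unfolding h by (simp add: field_simps)
  then show ?thesis by (rule filterlim_sequentially_Suc[THEN iffD1])
qed

theorem theorem2:
  fixes N :: nat and z c :: real
  assumes "N \<ge> 1" and "z > 0" and "c < 0"
  shows "(\<lambda>k. complex_of_real (z powr (- 1/2 - real k) *
              (\<Sum>j<N. H_coeff N k j * (ln z) ^ j)))
         sums (complex_of_real (pi powr (real N / 2)) -
               meijerG_vline 0 (N + 1) (1 # replicate N (1/2)) [0] c (complex_of_real z))"
proof -
  note N = assms(1) and z = assms(2) and c = assms(3)
  define f where "f = FF N z"
  define J where "J = (\<lambda>\<sigma>. LINT t|lborel. f (Complex \<sigma> t))"
  define trm where "trm = (\<lambda>k. complex_of_real (z powr (- 1/2 - real k) * (\<Sum>j<N. H_coeff N k j * (ln z) ^ j)))"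
  define G where "G = meijerG_vline 0 (N + 1) (1 # replicate N (1/2)) [0] c (complex_of_real z)"
  define P where "P = complex_of_real (pi powr (real N / 2))"
  define Kc where "Kc = Gamma (1/2 - c) ^ (N - 1) * Gamma (3/2 - c) * z powr (- c) / min (c^2) 1"
  have contc: "continuous_on UNIV (\<lambda>t. f (Complex c t))"
    unfolding f_def by (rule cont_line[where M = 1], rule in_H_c[OF c], simp)
  have intc: "integrable lborel (\<lambda>t. f (Complex c t))"
    by (rule integrable_by_bound(1)[OF contc]) (unfold f_def, rule FF_bound_c[OF z c N])
  have limc: "((\<lambda>T. contour_integral (linepath (Complex c (-T)) (Complex c T)) f) \<longlongrightarrow> \<i> * J c) at_top"
    unfolding J_def by (rule line_limit[OF intc contc])
  have GJ: "G = J c / (2 * pi)"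
  proof -
    have ieq: "meijerG_integrand 0 (N + 1) (1 # replicate N (1/2)) [0] (complex_of_real z) (Complex c t)
               = f (Complex c t)" for t
      unfolding f_def by (rule integrand_eq) (simp add: c)
    have "G = (1 / (2 * complex_of_real pi * \<i>)) * (LINT t|lborel. f (Complex c t) * \<i>)"
      unfolding G_def meijerG_vline_def ieq ..
    also have "\<dots> = J c / (2 * pi)" by (simp add: J_def field_simps)
    finally show ?thesis .
  qed
  have key: "(\<Sum>k<M. trm k) = J (real M) / (2 * pi) - G + P" if M: "M \<ge> 4" for M
  proof -
    have M1: "M \<ge> 1" using M by simp
    have contM: "continuous_on UNIV (\<lambda>t. f (Complex (real M) t))"
      unfolding f_def by (rule cont_line[where M = M], rule in_H_M[OF M1], simp)
    have intM: "integrable lborel (\<lambda>t. f (Complex (real M) t))"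
      by (rule integrable_by_bound(1)[OF contM]) (unfold f_def, rule FF_bound_M[OF z N M])
    have limM: "((\<lambda>T. contour_integral (linepath (Complex (real M) (-T)) (Complex (real M) T)) f) \<longlongrightarrow> \<i> * J (real M)) at_top"
      unfolding J_def by (rule line_limit[OF intM contM])
    have limB: "((\<lambda>T. contour_integral (linepath (Complex c (-T)) (Complex (real M) (-T))) f) \<longlongrightarrow> 0) at_top"
      unfolding f_def
      by (rule horiz_limit[OF z N c M1, where s = "-1"]) auto
    have limT: "((\<lambda>T. contour_integral (linepath (Complex (real M) T) (Complex c T)) f) \<longlongrightarrow> 0) at_top"
      unfolding f_def
      by (rule horiz_limit[OF z N c M1, where s = "1"]) auto
    define S where "S = (\<Sum>p\<in>poles M. residue f p)"
    have lim2: "((\<lambda>T. contour_integral (linepath (Complex (real M) (-T)) (Complex (real M) T)) f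
         + contour_integral (linepath (Complex c (-T)) (Complex (real M) (-T))) f
         + contour_integral (linepath (Complex (real M) T) (Complex c T)) f
         - 2 * pi * \<i> * S) \<longlongrightarrow> \<i> * J (real M) + 0 + 0 - 2 * pi * \<i> * S) at_top"
      by (intro tendsto_intros limM limB limT)
    have ev: "eventually (\<lambda>T. contour_integral (linepath (Complex (real M) (-T)) (Complex (real M) T)) f
         + contour_integral (linepath (Complex c (-T)) (Complex (real M) (-T))) f
         + contour_integral (linepath (Complex (real M) T) (Complex c T)) f
         - 2 * pi * \<i> * S = contour_integral (linepath (Complex c (-T)) (Complex c T)) f) at_top"
      using eventually_gt_at_top[of 0]
      by eventually_elim (simp add: S_def f_def rect_identity[OF c M1])
    have lim3: "((\<lambda>T. contour_integral (linepath (Complex c (-T)) (Complex c T)) f) \<longlongrightarrow>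
         \<i> * J (real M) + 0 + 0 - 2 * pi * \<i> * S) at_top"
      by (rule Lim_transform_eventually[OF lim2 ev])
    have "\<i> * J c = \<i> * J (real M) + 0 + 0 - 2 * pi * \<i> * S"
      by (rule tendsto_unique[OF _ limc lim3]) simp
    then have "\<i> * J c = \<i> * (J (real M) - 2 * pi * S)" by (simp add: algebra_simps)
    then have JS: "J c = J (real M) - 2 * pi * S"
      by (metis complex_i_not_zero mult_cancel_left)
    have "S = - P + (\<Sum>k<M. trm k)"
      unfolding S_def f_def P_def trm_def by (rule sum_poles[OF z N])
    then have "(\<Sum>k<M. trm k) = S + P" by simp
    also have "S = (J (real M) - J c) / (2 * pi)" using JS by (simp add: field_simps)
    finally show ?thesis using GJ by (simp add: field_simps)
  qed
  have J0: "(\<lambda>M. J (real M) / (2 * pi)) \<longlonglongrightarrow> 0"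
  proof -
    have "(\<lambda>M. J (real M)) \<longlonglongrightarrow> 0"
    proof (rule Lim_null_comparison)
      show "eventually (\<lambda>M. norm (J (real M)) \<le> 4 * sqrt pi * z powr (- real M) / fact (M - 1) * pi) sequentially"
        using eventually_ge_at_top[of 4]
      proof eventually_elim
        case (elim M)
        have M1: "M \<ge> 1" using elim by simp
        have contM: "continuous_on UNIV (\<lambda>t. f (Complex (real M) t))"
          unfolding f_def by (rule cont_line[where M = M], rule in_H_M[OF M1], simp)
        show ?case unfolding J_def
          by (rule integrable_by_bound(2)[OF contM]) (unfold f_def, rule FF_bound_M[OF z N elim])
      qed
      show "(\<lambda>M. 4 * sqrt pi * z powr (- real M) / fact (M - 1) * pi) \<longlonglongrightarrow> 0"
        by (rule fact_decay[OF z])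
    qed
    then show ?thesis by (intro tendsto_divide_zero)
  qed
  have L: "(\<lambda>M. J (real M) / (2 * pi) - G + P) \<longlonglongrightarrow> P - G"
    using tendsto_add[OF tendsto_diff[OF J0 tendsto_const[of G]] tendsto_const[of P]] by simp
  have E: "eventually (\<lambda>M. J (real M) / (2 * pi) - G + P = (\<Sum>k<M. trm k)) sequentially"
    using eventually_ge_at_top[of 4] by eventually_elim (simp add: key)
  have "(\<lambda>M. \<Sum>k<M. trm k) \<longlonglongrightarrow> P - G" by (rule Lim_transform_eventually[OF L E])
  then show ?thesis unfolding sums_def trm_def P_def G_def by simp
qed

end
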